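(* TDS is co-recursively-enumerable, i.e., the set of TDS instances that have no solution is recursively enumerable.
   Context: An instance of TDS consists of a rational discount factor $0<\lambda<1$, a rational target $t$, and rational weights $a,b$; a solution is an infinite sequence $w\in\{a,b\}^\omega$ with $\sum_{i=0}^\infty w(i)\lambda^i=t$. *)

theory Defs
  imports Complex_Main
begin

definition tds_instance :: "rat \<Rightarrow> bool" where
  "tds_instance lam \<longleftrightarrow> 0 < lam \<and> lam < 1"

definition tds_solution :: "rat \<Rightarrow> rat \<Rightarrow> rat \<Rightarrow> rat \<Rightarrow> (nat \<Rightarrow> rat) \<Rightarrow> bool" where
  "tds_solution lam t a b w \<longleftrightarrow>
     (\<forall>i. w i \<in> {a, b}) \<and>
     ((\<lambda>i. real_of_rat (w i) * real_of_rat lam ^ i) sums real_of_rat t)"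

datatype recf = Zero | Succ | Proj nat | Comp recf "recf list"
  | PrimRec recf recf | Minim recf

inductive reval :: "recf \<Rightarrow> nat list \<Rightarrow> nat \<Rightarrow> bool" where
  zero: "reval Zero xs 0"
| succ: "reval Succ (x # xs) (Suc x)"
| proj: "i < length xs \<Longrightarrow> reval (Proj i) xs (xs ! i)"
| comp: "list_all2 (\<lambda>g z. reval g xs z) gs zs \<Longrightarrow> reval f zs y \<Longrightarrow> reval (Comp f gs) xs y"
| prim0: "reval f xs y \<Longrightarrow> reval (PrimRec f g) (0 # xs) y"
| primS: "reval (PrimRec f g) (n # xs) r \<Longrightarrow> reval g (r # n # xs) y
          \<Longrightarrow> reval (PrimRec f g) (Suc n # xs) y"
| minim: "reval f (y # xs) 0 \<Longrightarrow> (\<forall>z<y. \<exists>v. v > 0 \<and> reval f (z # xs) v)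
          \<Longrightarrow> reval (Minim f) xs y"
monos list_all2_mono

definition re_set :: "nat \<Rightarrow> nat list set \<Rightarrow> bool" where
  "re_set k A \<longleftrightarrow> (\<forall>xs\<in>A. length xs = k) \<and>
     (\<exists>f. \<forall>xs. length xs = k \<longrightarrow> (xs \<in> A \<longleftrightarrow> (\<exists>y. reval f xs y)))"

definition int_code :: "int \<Rightarrow> nat" where
  "int_code z = (if z \<ge> 0 then nat (2 * z) else nat (- 2 * z - 1))"

definition rat_code :: "rat \<Rightarrow> nat list" where
  "rat_code q = [int_code (fst (quotient_of q)), int_code (snd (quotient_of q))]"

definition inst_code :: "rat \<Rightarrow> rat \<Rightarrow> rat \<Rightarrow> rat \<Rightarrow> nat list" where
  "inst_code lam t a b = rat_code lam @ rat_code t @ rat_code a @ rat_code b"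

end

theory Submission
  imports Defs
begin

definition rcomp :: "nat \<Rightarrow> (nat list \<Rightarrow> nat) \<Rightarrow> bool" where
  "rcomp k f \<longleftrightarrow> (\<exists>c. \<forall>xs. length xs = k \<longrightarrow> reval c xs (f xs))"

lemma rcomp_cong:
  assumes "rcomp k f" "\<And>xs. length xs = k \<Longrightarrow> f xs = g xs"
  shows "rcomp k g"
  using assms unfolding rcomp_def by metis

lemma rcomp_zero: "rcomp k (\<lambda>xs. 0)"
  unfolding rcomp_def by (blast intro: reval.zero)

lemma rcomp_proj: "i < k \<Longrightarrow> rcomp k (\<lambda>xs. xs ! i)"
  unfolding rcomp_def by (auto intro!: exI[of _ "Proj i"] reval.proj)

lemma codes_exist:
  assumes "\<forall>f\<in>set fs. rcomp k f"
  shows "\<exists>cs. list_all2 (\<lambda>c f. \<forall>xs. length xs = k \<longrightarrow> reval c xs (f xs)) cs fs"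
  using assms
proof (induction fs)
  case Nil then show ?case by auto
next
  case (Cons f fs)
  then obtain cs where "list_all2 (\<lambda>c f. \<forall>xs. length xs = k \<longrightarrow> reval c xs (f xs)) cs fs" by auto
  moreover from Cons.prems obtain c where "\<forall>xs. length xs = k \<longrightarrow> reval c xs (f xs)"
    unfolding rcomp_def by auto
  ultimately show ?case by (intro exI[of _ "c # cs"]) auto
qed

lemma rcomp_comp:
  assumes "rcomp (length fs) g" "\<forall>f\<in>set fs. rcomp k f"
  shows "rcomp k (\<lambda>xs. g (map (\<lambda>f. f xs) fs))"
proof -
  obtain cs where cs: "list_all2 (\<lambda>c f. \<forall>xs. length xs = k \<longrightarrow> reval c xs (f xs)) cs fs"
    using codes_exist[OF assms(2)] by auto
  obtain cg where cg: "\<forall>xs. length xs = length fs \<longrightarrow> reval cg xs (g xs)"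
    using assms(1) unfolding rcomp_def by auto
  have "reval (Comp cg cs) xs (g (map (\<lambda>f. f xs) fs))" if "length xs = k" for xs
  proof (rule reval.comp)
    show "list_all2 (\<lambda>g z. reval g xs z) cs (map (\<lambda>f. f xs) fs)"
      using cs that by (auto simp: list_all2_map2 elim!: list_all2_mono)
    show "reval cg (map (\<lambda>f. f xs) fs) (g (map (\<lambda>f. f xs) fs))" using cg by simp
  qed
  then show ?thesis unfolding rcomp_def by blast
qed

lemma rcomp_succ: "rcomp 1 (\<lambda>xs. Suc (xs ! 0))"
  unfolding rcomp_def
  by (auto intro!: exI[of _ Succ] simp: length_Suc_conv reval.succ)

fun prec :: "(nat list \<Rightarrow> nat) \<Rightarrow> (nat list \<Rightarrow> nat) \<Rightarrow> nat \<Rightarrow> nat list \<Rightarrow> nat" where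
  "prec f g 0 ys = f ys"
| "prec f g (Suc n) ys = g (prec f g n ys # n # ys)"

lemma rcomp_prec:
  assumes "rcomp k f" "rcomp (Suc (Suc k)) g"
  shows "rcomp (Suc k) (\<lambda>xs. prec f g (hd xs) (tl xs))"
proof -
  obtain cf where cf: "\<forall>xs. length xs = k \<longrightarrow> reval cf xs (f xs)"
    using assms(1) unfolding rcomp_def by auto
  obtain cg where cg: "\<forall>xs. length xs = Suc (Suc k) \<longrightarrow> reval cg xs (g xs)"
    using assms(2) unfolding rcomp_def by auto
  have *: "reval (PrimRec cf cg) (n # ys) (prec f g n ys)" if "length ys = k" for n ys
    using that
  proof (induction n)
    case 0 then show ?case using cf by (auto intro: reval.prim0)
  next
    case (Suc n) then show ?case using cg by (auto intro: reval.primS)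
  qed
  show ?thesis unfolding rcomp_def
    by (rule exI[of _ "PrimRec cf cg"]) (auto simp: length_Suc_conv *)
qed

lemma rcomp_reindex:
  assumes "rcomp m F" "\<forall>j<m. idx j < k"
  shows "rcomp k (\<lambda>xs. F (map (\<lambda>j. xs ! idx j) [0..<m]))"
proof -
  have "rcomp k (\<lambda>xs. F (map (\<lambda>f. f xs) (map (\<lambda>j xs. xs ! idx j) [0..<m])))"
    by (rule rcomp_comp) (use assms in \<open>auto intro: rcomp_proj\<close>)
  then show ?thesis by (simp add: comp_def)
qed

lemma rcomp_comp2:
  assumes "rcomp 2 g" "rcomp k f1" "rcomp k f2"
  shows "rcomp k (\<lambda>xs. g [f1 xs, f2 xs])"
  using rcomp_comp[of "[f1, f2]" g k] assms by (simp add: numeral_2_eq_2)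

lemma rcomp_comp1:
  assumes "rcomp 1 g" "rcomp k f1"
  shows "rcomp k (\<lambda>xs. g [f1 xs])"
  using rcomp_comp[of "[f1]" g k] assms by simp

lemma rcomp_shift:
  assumes "rcomp (Suc k) F" "rcomp k B"
  shows "rcomp k (\<lambda>xs. F (B xs # xs))"
proof -
  have "rcomp k (\<lambda>xs. F (map (\<lambda>f. f xs) (B # map (\<lambda>j xs. xs ! j) [0..<k])))"
    by (rule rcomp_comp) (use assms in \<open>auto intro: rcomp_proj\<close>)
  then show ?thesis
    by (rule rcomp_cong) (simp add: comp_def, metis map_nth)
qed

lemma la2_unique:
  "list_all2 (\<lambda>g z. P g z \<and> (\<forall>z'. P g z' \<longrightarrow> z = z')) gs zs \<Longrightarrow> list_all2 P gs zs' \<Longrightarrow> zs = zs'"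
proof (induction gs arbitrary: zs zs')
  case Nil then show ?case by simp
next
  case (Cons g gs) then show ?case by (auto simp: list_all2_Cons1)
qed

lemma reval_det: "reval f xs y \<Longrightarrow> reval f xs y' \<Longrightarrow> y = y'"
proof (induction arbitrary: y' rule: reval.induct)
  case (zero xs) from zero.prems show ?case by (cases rule: reval.cases) auto
next
  case (succ x xs) from succ.prems show ?case by (cases rule: reval.cases) auto
next
  case (proj i xs) from proj.prems show ?case by (cases rule: reval.cases) auto
next
  case (comp xs gs zs f y)
  from comp.prems obtain zs' where zs': "list_all2 (\<lambda>g z. reval g xs z) gs zs'" "reval f zs' y'"
    by (cases rule: reval.cases) auto
  have "zs = zs'"
    using comp(1) zs'(1) by (rule la2_unique)
  then show ?case using comp zs' by auto
next
  case (prim0 f xs y)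
  from prim0.prems show ?case by (cases rule: reval.cases) (use prim0.IH in auto)
next
  case (primS f g n xs r y)
  from primS.prems obtain r' where "reval (PrimRec f g) (n # xs) r'" "reval g (r' # n # xs) y'"
    by (cases rule: reval.cases) auto
  then show ?case using primS.IH by metis
next
  case (minim f y xs)
  from minim.prems obtain y2 where y2: "y' = y2" "reval f (y2 # xs) 0"
    "\<forall>z<y2. \<exists>v>0. reval f (z # xs) v"
    by (cases rule: reval.cases) auto
  show ?case
  proof (rule ccontr)
    assume "y \<noteq> y'"
    then consider "y < y2" | "y2 < y" using y2 by linarith
    then show False
    proof cases
      case 1 then obtain v where "v > 0" "reval f (y # xs) v" using y2 by auto
      then show False using minim.IH(1) by fastforce
    next
      case 2 then obtain v where "v > 0" "\<And>w. reval f (y2 # xs) w \<Longrightarrow> v = w"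
        using minim.IH(2) by blast
      then show False using y2 by fastforce
    qed
  qed
qed

lemma rcomp_cong':
  assumes "rcomp k f" "k = k'" "\<And>xs. length xs = k' \<Longrightarrow> f xs = g xs"
  shows "rcomp k' g"
  using assms rcomp_cong by metis

lemma rcomp_const: "rcomp k (\<lambda>xs. n)"
proof (induction n)
  case 0 then show ?case by (rule rcomp_zero)
next
  case (Suc n)
  show ?case using rcomp_comp1[OF rcomp_succ Suc] by simp
qed

lemma prec_add: "prec (\<lambda>ys. ys!0) (\<lambda>zs. Suc (zs!0)) n ys = n + ys!0"
  by (induction n) auto

lemma rcomp_add2: "rcomp 2 (\<lambda>xs. xs!0 + xs!1)"
proof -
  have "rcomp 3 (\<lambda>zs. Suc (zs!0))" using rcomp_comp1[OF rcomp_succ rcomp_proj[of 0 3]] by simp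
  then have "rcomp (Suc 1) (\<lambda>xs. prec (\<lambda>ys. ys!0) (\<lambda>zs. Suc (zs!0)) (hd xs) (tl xs))"
    by (intro rcomp_prec rcomp_proj) (auto simp: numeral_3_eq_3)
  then show ?thesis
    by (rule rcomp_cong') (simp_all add: prec_add, auto simp: length_Suc_conv numeral_2_eq_2)
qed

lemma rcomp_add: "rcomp k f \<Longrightarrow> rcomp k g \<Longrightarrow> rcomp k (\<lambda>xs. f xs + g xs)"
  using rcomp_comp2[OF rcomp_add2] by simp

lemma prec_mult: "prec (\<lambda>ys. 0) (\<lambda>zs. zs!0 + zs!2) n ys = n * ys!0"
  by (induction n) auto

lemma rcomp_mult2: "rcomp 2 (\<lambda>xs. xs!0 * xs!1)"
proof -
  have "rcomp 3 (\<lambda>zs. zs!0 + zs!2)" by (intro rcomp_add rcomp_proj) auto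
  then have "rcomp (Suc 1) (\<lambda>xs. prec (\<lambda>ys. 0) (\<lambda>zs. zs!0 + zs!2) (hd xs) (tl xs))"
    by (intro rcomp_prec rcomp_zero) (auto simp: numeral_3_eq_3)
  then show ?thesis
    by (rule rcomp_cong') (simp_all add: prec_mult, auto simp: length_Suc_conv numeral_2_eq_2)
qed

lemma rcomp_mult: "rcomp k f \<Longrightarrow> rcomp k g \<Longrightarrow> rcomp k (\<lambda>xs. f xs * g xs)"
  using rcomp_comp2[OF rcomp_mult2] by simp

lemma prec_pred: "prec (\<lambda>ys. 0) (\<lambda>zs. zs!Suc 0) n ys = n - Suc 0"
  by (induction n) auto

lemma rcomp_pred1: "rcomp 1 (\<lambda>xs. xs!0 - 1)"
proof -
  have "rcomp (Suc 0) (\<lambda>xs. prec (\<lambda>ys. 0) (\<lambda>zs. zs!Suc 0) (hd xs) (tl xs))"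
    by (intro rcomp_prec rcomp_zero rcomp_proj) auto
  then show ?thesis
    by (rule rcomp_cong') (simp_all add: prec_pred, auto simp: length_Suc_conv)
qed

lemma prec_sub: "prec (\<lambda>ys. ys!0) (\<lambda>zs. zs!0 - Suc 0) n ys = ys!0 - n"
  by (induction n) auto

lemma rcomp_sub2: "rcomp 2 (\<lambda>xs. xs!1 - xs!0)"
proof -
  have "rcomp 3 (\<lambda>zs. zs!0 - Suc 0)" using rcomp_comp1[OF rcomp_pred1 rcomp_proj[of 0 3]] by simp
  then have "rcomp (Suc 1) (\<lambda>xs. prec (\<lambda>ys. ys!0) (\<lambda>zs. zs!0 - Suc 0) (hd xs) (tl xs))"
    by (intro rcomp_prec rcomp_proj) (auto simp: numeral_3_eq_3)
  then show ?thesis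
    by (rule rcomp_cong') (simp_all add: prec_sub, auto simp: length_Suc_conv numeral_2_eq_2)
qed

lemma rcomp_sub: "rcomp k f \<Longrightarrow> rcomp k g \<Longrightarrow> rcomp k (\<lambda>xs. f xs - g xs)"
  using rcomp_comp2[OF rcomp_sub2, of k g f] by simp

lemma prec_pow: "prec (\<lambda>ys. Suc 0) (\<lambda>zs. zs!0 * zs!2) n ys = ys!0 ^ n"
  by (induction n) auto

lemma rcomp_pow2: "rcomp 2 (\<lambda>xs. xs!1 ^ xs!0)"
proof -
  have "rcomp 3 (\<lambda>zs. zs!0 * zs!2)" by (intro rcomp_mult rcomp_proj) auto
  then have "rcomp (Suc 1) (\<lambda>xs. prec (\<lambda>ys. Suc 0) (\<lambda>zs. zs!0 * zs!2) (hd xs) (tl xs))"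
    by (intro rcomp_prec rcomp_const) (auto simp: numeral_3_eq_3)
  then show ?thesis
    by (rule rcomp_cong') (simp_all add: prec_pow, auto simp: length_Suc_conv numeral_2_eq_2)
qed

lemma rcomp_pow: "rcomp k f \<Longrightarrow> rcomp k g \<Longrightarrow> rcomp k (\<lambda>xs. f xs ^ g xs)"
  using rcomp_comp2[OF rcomp_pow2, of k g f] by simp

lemma map_Suc_tl: "map (\<lambda>j. zs ! Suc j) [0..<length zs - 1] = tl zs"
  by (rule nth_equalityI) (auto simp: nth_tl)

lemma prec_sum: "prec (\<lambda>ys. 0) (\<lambda>zs. zs!0 + F (tl zs)) n ys = (\<Sum>i<n. F (i # ys))"
  by (induction n) auto

lemma rcomp_sum:
  assumes "rcomp (Suc k) F" "rcomp k B"
  shows "rcomp k (\<lambda>xs. \<Sum>i<B xs. F (i # xs))"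
proof -
  have "rcomp (Suc (Suc k)) (\<lambda>zs. F (map (\<lambda>j. zs ! Suc j) [0..<Suc k]))"
    by (rule rcomp_reindex[OF assms(1)]) auto
  then have "rcomp (Suc (Suc k)) (\<lambda>zs. F (tl zs))"
    by (rule rcomp_cong) (metis diff_Suc_1 map_Suc_tl)
  then have "rcomp (Suc (Suc k)) (\<lambda>zs. zs!0 + F (tl zs))"
    by (intro rcomp_add rcomp_proj) auto
  then have "rcomp (Suc k) (\<lambda>xs. prec (\<lambda>ys. 0) (\<lambda>zs. zs!0 + F (tl zs)) (hd xs) (tl xs))"
    by (intro rcomp_prec rcomp_zero)
  then have "rcomp (Suc k) (\<lambda>xs. \<Sum>i<hd xs. F (i # tl xs))"
    by (simp add: prec_sum)
  from rcomp_shift[OF this assms(2)] show ?thesis by simp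
qed

lemma sum_less_ind: "d \<le> x \<Longrightarrow> (\<Sum>j<x. if j < d then 1 else 0) = (d::nat)"
proof (induction x)
  case 0 then show ?case by simp
next
  case (Suc x) then show ?case by (cases "d \<le> x") auto
qed

lemma div_as_sum: "(x::nat) div y = (\<Sum>j<x. if (Suc j) * y \<le> x \<and> 0 < y then 1 else 0)"
proof (cases "y = 0")
  case True then show ?thesis by simp
next
  case False
  have "(\<Sum>j<x. if (Suc j) * y \<le> x \<and> 0 < y then 1 else 0) = (\<Sum>j<x. if j < x div y then 1 else (0::nat))"
  proof (rule sum.cong)
    fix j assume "j \<in> {..<x}"
    have "Suc j * y \<le> x \<longleftrightarrow> Suc j \<le> x div y" using False
      by (simp add: less_eq_div_iff_mult_less_eq mult.commute)
    then show "(if (Suc j) * y \<le> x \<and> 0 < y then 1 else 0) = (if j < x div y then 1 else (0::nat))"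
      using False by auto
  qed simp
  also have "\<dots> = x div y" by (rule sum_less_ind) simp
  finally show ?thesis by simp
qed

definition bcomp :: "nat \<Rightarrow> (nat list \<Rightarrow> bool) \<Rightarrow> bool" where
  "bcomp k P \<longleftrightarrow> rcomp k (\<lambda>xs. if P xs then 1 else 0)"

lemma bcomp_le: "rcomp k f \<Longrightarrow> rcomp k g \<Longrightarrow> bcomp k (\<lambda>xs. f xs \<le> g xs)"
proof -
  assume "rcomp k f" "rcomp k g"
  then have "rcomp k (\<lambda>xs. 1 - (f xs - g xs))" by (intro rcomp_sub rcomp_const)
  then show ?thesis unfolding bcomp_def by (rule rcomp_cong) auto
qed

lemma bcomp_less: "rcomp k f \<Longrightarrow> rcomp k g \<Longrightarrow> bcomp k (\<lambda>xs. f xs < g xs)"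
  using bcomp_le[of k "\<lambda>xs. Suc (f xs)" g] rcomp_add[OF _ rcomp_const[of k 1], of f]
  by (simp add: Suc_le_eq)

lemma bcomp_and: "bcomp k P \<Longrightarrow> bcomp k Q \<Longrightarrow> bcomp k (\<lambda>xs. P xs \<and> Q xs)"
proof -
  assume "bcomp k P" "bcomp k Q"
  then have "rcomp k (\<lambda>xs. (if P xs then 1 else 0) * (if Q xs then 1 else 0))"
    unfolding bcomp_def by (intro rcomp_mult)
  then show ?thesis unfolding bcomp_def by (rule rcomp_cong) auto
qed

lemma bcomp_not: "bcomp k P \<Longrightarrow> bcomp k (\<lambda>xs. \<not> P xs)"
proof -
  assume "bcomp k P"
  then have "rcomp k (\<lambda>xs. 1 - (if P xs then 1 else 0))"
    unfolding bcomp_def by (intro rcomp_sub rcomp_const)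
  then show ?thesis unfolding bcomp_def by (rule rcomp_cong) auto
qed

lemma bcomp_or: "bcomp k P \<Longrightarrow> bcomp k Q \<Longrightarrow> bcomp k (\<lambda>xs. P xs \<or> Q xs)"
  using bcomp_not[OF bcomp_and[OF bcomp_not bcomp_not], of k P Q] by simp

lemma bcomp_imp: "bcomp k P \<Longrightarrow> bcomp k Q \<Longrightarrow> bcomp k (\<lambda>xs. P xs \<longrightarrow> Q xs)"
  using bcomp_or[OF bcomp_not, of k P Q] by simp

lemma bcomp_eq: "rcomp k f \<Longrightarrow> rcomp k g \<Longrightarrow> bcomp k (\<lambda>xs. f xs = g xs)"
  using bcomp_and[OF bcomp_le bcomp_le, of k f g g f] by (simp add: order_eq_iff)

lemma bcomp_const: "bcomp k (\<lambda>xs. b)"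
  unfolding bcomp_def by (rule rcomp_const)

lemma bcomp_cong:
  assumes "bcomp k P" "\<And>xs. length xs = k \<Longrightarrow> P xs = Q xs"
  shows "bcomp k Q"
  unfolding bcomp_def using assms(1)[unfolded bcomp_def] by (rule rcomp_cong) (simp add: assms(2))

lemma rcomp_if: "bcomp k P \<Longrightarrow> rcomp k f \<Longrightarrow> rcomp k g \<Longrightarrow> rcomp k (\<lambda>xs. if P xs then f xs else g xs)"
proof -
  assume "bcomp k P" "rcomp k f" "rcomp k g"
  then have "rcomp k (\<lambda>xs. (if P xs then 1 else 0) * f xs + (1 - (if P xs then 1 else 0)) * g xs)"
    unfolding bcomp_def by (intro rcomp_add rcomp_mult rcomp_sub rcomp_const)
  then show ?thesis by (rule rcomp_cong) auto
qed

lemma bcomp_all: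
  assumes "bcomp (Suc k) P" "rcomp k B"
  shows "bcomp k (\<lambda>xs. \<forall>i<B xs. P (i # xs))"
proof -
  have r: "rcomp k (\<lambda>xs. 1 - (\<Sum>i<B xs. 1 - (if P (i # xs) then 1 else 0)))"
    using assms unfolding bcomp_def
    by (intro rcomp_sub rcomp_const rcomp_sum) (auto intro: rcomp_sub rcomp_const)
  show ?thesis unfolding bcomp_def
  proof (rule rcomp_cong[OF r])
    fix xs :: "nat list"
    show "1 - (\<Sum>i<B xs. 1 - (if P (i # xs) then 1 else 0)) = (if \<forall>i<B xs. P (i # xs) then 1 else (0::nat))"
    proof (cases "\<forall>i<B xs. P (i # xs)")
      case True
      then have h: "(\<Sum>i<B xs. 1 - (if P (i # xs) then 1 else 0::nat)) = 0" by simp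
      show ?thesis unfolding h using True by simp
    next
      case False
      then obtain i where i: "i < B xs" "\<not> P (i # xs)" by auto
      have "(1::nat) - (if P (i # xs) then 1 else 0) \<le> (\<Sum>i<B xs. 1 - (if P (i # xs) then 1 else 0))"
        by (rule member_le_sum) (use i in auto)
      then show ?thesis using False i by simp
    qed
  qed
qed

lemma bcomp_ex:
  assumes "bcomp (Suc k) P" "rcomp k B"
  shows "bcomp k (\<lambda>xs. \<exists>i<B xs. P (i # xs))"
  using bcomp_not[OF bcomp_all[OF bcomp_not[OF assms(1)] assms(2)]] by simp

lemma rcomp_div2: "rcomp 2 (\<lambda>xs. xs!0 div xs!1)"
proof -
  have "bcomp 3 (\<lambda>ys. (ys!0 + 1) * ys!2 \<le> ys!1)"
    by (intro bcomp_le rcomp_mult rcomp_add rcomp_proj rcomp_const) auto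
  moreover have "bcomp 3 (\<lambda>ys. 0 < ys!2)"
    by (intro bcomp_less rcomp_proj rcomp_const) auto
  ultimately have "bcomp 3 (\<lambda>ys. (ys!0 + 1) * ys!2 \<le> ys!1 \<and> 0 < ys!2)"
    by (rule bcomp_and)
  then have "rcomp (Suc 2) (\<lambda>ys. if (ys!0 + 1) * ys!2 \<le> ys!1 \<and> 0 < ys!2 then 1 else 0)"
    unfolding bcomp_def by (simp add: numeral_3_eq_3)
  then have "rcomp 2 (\<lambda>xs. \<Sum>j<xs!0. (\<lambda>ys. if (ys!0 + 1) * ys!2 \<le> ys!1 \<and> 0 < ys!2 then 1 else 0) (j # xs))"
    by (rule rcomp_sum) (rule rcomp_proj, simp)
  then show ?thesis by (rule rcomp_cong) (simp add: div_as_sum numeral_2_eq_2)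
qed

lemma rcomp_div: "rcomp k f \<Longrightarrow> rcomp k g \<Longrightarrow> rcomp k (\<lambda>xs. f xs div g xs)"
  using rcomp_comp2[OF rcomp_div2] by simp

lemma bcomp_even: "rcomp k f \<Longrightarrow> bcomp k (\<lambda>xs. even (f xs))"
proof -
  assume f: "rcomp k f"
  have "bcomp k (\<lambda>xs. f xs - 2 * (f xs div 2) = 0)"
    by (intro bcomp_eq rcomp_sub rcomp_mult rcomp_div rcomp_const f)
  then show ?thesis by (simp add: minus_mult_div_eq_mod even_iff_mod_2_eq_zero)
qed

lemma bcomp_dvd: "rcomp k f \<Longrightarrow> rcomp k g \<Longrightarrow> bcomp k (\<lambda>xs. f xs dvd g xs)"
proof -
  assume f: "rcomp k f" and g: "rcomp k g"
  have "bcomp k (\<lambda>xs. g xs - f xs * (g xs div f xs) = 0)"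
    by (intro bcomp_eq rcomp_sub rcomp_mult rcomp_div rcomp_const f g)
  then show ?thesis by (simp add: minus_mult_div_eq_mod dvd_eq_mod_eq_0)
qed

lemma rcomp_minim:
  assumes "bcomp (Suc k) P"
  shows "\<exists>c. \<forall>xs. length xs = k \<longrightarrow> ((\<exists>y. reval c xs y) \<longleftrightarrow> (\<exists>n. P (n # xs)))"
proof -
  obtain c where c: "\<forall>xs. length xs = Suc k \<longrightarrow> reval c xs (if \<not> P xs then 1 else 0)"
    using bcomp_not[OF assms] unfolding bcomp_def rcomp_def by auto
  have "(\<exists>y. reval (Minim c) xs y) \<longleftrightarrow> (\<exists>n. P (n # xs))" if "length xs = k" for xs
  proof
    assume "\<exists>y. reval (Minim c) xs y"
    then obtain y where "reval c (y # xs) 0" by (auto elim: reval.cases)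
    moreover have "reval c (y # xs) (if \<not> P (y # xs) then 1 else 0)" using c that by auto
    ultimately have "0 = (if \<not> P (y # xs) then 1 else (0::nat))" by (rule reval_det)
    then have "P (y # xs)" by (simp split: if_splits)
    then show "\<exists>n. P (n # xs)" by blast
  next
    assume "\<exists>n. P (n # xs)"
    then have ex: "\<exists>n. P (n # xs)" .
    define y where "y = (LEAST n. P (n # xs))"
    have Py: "P (y # xs)" unfolding y_def using ex by (rule LeastI_ex)
    have np: "\<forall>z<y. \<not> P (z # xs)" unfolding y_def using not_less_Least by blast
    have cz: "reval c (z # xs) (if \<not> P (z # xs) then 1 else 0)" for z using c that by simp
    have r0: "reval c (y # xs) 0" using cz[of y] Py by simp
    have "\<forall>z<y. \<exists>v>0. reval c (z # xs) v"
    proof (intro allI impI)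
      fix z assume "z < y"
      then have "reval c (z # xs) 1" using cz[of z] np by simp
      then show "\<exists>v>0. reval c (z # xs) v" by blast
    qed
    then have "reval (Minim c) xs y" using r0 by (intro reval.minim)
    then show "\<exists>y. reval (Minim c) xs y" by blast
  qed
  then show ?thesis by blast
qed

definition icomp :: "nat \<Rightarrow> (nat list \<Rightarrow> int) \<Rightarrow> bool" where
  "icomp k E \<longleftrightarrow> (\<exists>P N. rcomp k P \<and> rcomp k N \<and> (\<forall>xs. length xs = k \<longrightarrow> E xs = int (P xs) - int (N xs)))"

lemma icomp_cong:
  assumes "icomp k E" "\<And>xs. length xs = k \<Longrightarrow> E xs = F xs"
  shows "icomp k F"
  using assms unfolding icomp_def by metis

lemma icomp_nat: "rcomp k f \<Longrightarrow> icomp k (\<lambda>xs. int (f xs))"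
  unfolding icomp_def by (intro exI[of _ f] exI[of _ "\<lambda>_. 0"]) (auto intro: rcomp_const)

lemma icompI:
  "rcomp k P \<Longrightarrow> rcomp k N \<Longrightarrow> (\<And>xs. length xs = k \<Longrightarrow> E xs = int (P xs) - int (N xs)) \<Longrightarrow> icomp k E"
  unfolding icomp_def by blast

lemma icompE:
  assumes "icomp k E"
  obtains P N where "rcomp k P" "rcomp k N" "\<And>xs. length xs = k \<Longrightarrow> E xs = int (P xs) - int (N xs)"
  using assms unfolding icomp_def by blast

lemma icomp_add: "icomp k E \<Longrightarrow> icomp k F \<Longrightarrow> icomp k (\<lambda>xs. E xs + F xs)"
proof -
  assume "icomp k E" "icomp k F"
  then obtain P1 N1 P2 N2 where p: "rcomp k P1" "rcomp k N1" "rcomp k P2" "rcomp k N2"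
    and e: "\<And>xs. length xs = k \<Longrightarrow> E xs = int (P1 xs) - int (N1 xs)"
    "\<And>xs. length xs = k \<Longrightarrow> F xs = int (P2 xs) - int (N2 xs)"
    by (metis icompE)
  show ?thesis
    by (rule icompI[of _ "\<lambda>xs. P1 xs + P2 xs" "\<lambda>xs. N1 xs + N2 xs"]) (auto intro: rcomp_add p simp: e)
qed

lemma icomp_sub: "icomp k E \<Longrightarrow> icomp k F \<Longrightarrow> icomp k (\<lambda>xs. E xs - F xs)"
proof -
  assume "icomp k E" "icomp k F"
  then obtain P1 N1 P2 N2 where p: "rcomp k P1" "rcomp k N1" "rcomp k P2" "rcomp k N2"
    and e: "\<And>xs. length xs = k \<Longrightarrow> E xs = int (P1 xs) - int (N1 xs)"
    "\<And>xs. length xs = k \<Longrightarrow> F xs = int (P2 xs) - int (N2 xs)"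
    by (metis icompE)
  show ?thesis
    by (rule icompI[of _ "\<lambda>xs. P1 xs + N2 xs" "\<lambda>xs. N1 xs + P2 xs"]) (auto intro: rcomp_add p simp: e)
qed

lemma icomp_mult: "icomp k E \<Longrightarrow> icomp k F \<Longrightarrow> icomp k (\<lambda>xs. E xs * F xs)"
proof -
  assume "icomp k E" "icomp k F"
  then obtain P1 N1 P2 N2 where p: "rcomp k P1" "rcomp k N1" "rcomp k P2" "rcomp k N2"
    and e: "\<And>xs. length xs = k \<Longrightarrow> E xs = int (P1 xs) - int (N1 xs)"
    "\<And>xs. length xs = k \<Longrightarrow> F xs = int (P2 xs) - int (N2 xs)"
    by (metis icompE)
  show ?thesis
    by (rule icompI[of _ "\<lambda>xs. P1 xs * P2 xs + N1 xs * N2 xs" "\<lambda>xs. P1 xs * N2 xs + N1 xs * P2 xs"])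
      (intro rcomp_add rcomp_mult p, intro rcomp_add rcomp_mult p, simp add: e algebra_simps)
qed

lemma icomp_if: "bcomp k B \<Longrightarrow> icomp k E \<Longrightarrow> icomp k F \<Longrightarrow> icomp k (\<lambda>xs. if B xs then E xs else F xs)"
proof -
  assume b: "bcomp k B" and "icomp k E" "icomp k F"
  then obtain P1 N1 P2 N2 where p: "rcomp k P1" "rcomp k N1" "rcomp k P2" "rcomp k N2"
    and e: "\<And>xs. length xs = k \<Longrightarrow> E xs = int (P1 xs) - int (N1 xs)"
    "\<And>xs. length xs = k \<Longrightarrow> F xs = int (P2 xs) - int (N2 xs)"
    by (metis icompE)
  show ?thesis
    by (rule icompI[of _ "\<lambda>xs. if B xs then P1 xs else P2 xs" "\<lambda>xs. if B xs then N1 xs else N2 xs"])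
      (auto intro: rcomp_if b p simp: e)
qed

lemma bcomp_ile: "icomp k E \<Longrightarrow> bcomp k (\<lambda>xs. E xs \<le> 0)"
proof -
  assume "icomp k E"
  then obtain P N where p: "rcomp k P" "rcomp k N"
    and e: "\<And>xs. length xs = k \<Longrightarrow> E xs = int (P xs) - int (N xs)"
    by (metis icompE)
  have "bcomp k (\<lambda>xs. P xs \<le> N xs)" by (intro bcomp_le p)
  then show ?thesis by (rule bcomp_cong) (simp add: e)
qed

lemma bcomp_ilt: "icomp k E \<Longrightarrow> icomp k F \<Longrightarrow> bcomp k (\<lambda>xs. E xs < F xs)"
proof -
  assume "icomp k E" "icomp k F"
  then have "bcomp k (\<lambda>xs. \<not> (F xs - E xs \<le> 0))" by (intro bcomp_not bcomp_ile icomp_sub)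
  then show ?thesis by (rule bcomp_cong) auto
qed

lemma icomp_sum:
  assumes "icomp (Suc k) F" "rcomp k B"
  shows "icomp k (\<lambda>xs. \<Sum>i<B xs. F (i # xs))"
proof -
  obtain P N where p: "rcomp (Suc k) P" "rcomp (Suc k) N"
    and e: "\<And>xs. length xs = Suc k \<Longrightarrow> F xs = int (P xs) - int (N xs)"
    using assms(1) by (metis icompE)
  show ?thesis
    by (rule icompI[of _ "\<lambda>xs. \<Sum>i<B xs. P (i # xs)" "\<lambda>xs. \<Sum>i<B xs. N (i # xs)"])
      (auto intro: rcomp_sum assms(2) p simp: e sum_subtractf)
qed

definition dec :: "nat \<Rightarrow> int" where
  "dec c = (if even c then int (c div 2) else - int ((c + 1) div 2))"

definition natabs :: "nat \<Rightarrow> nat" where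
  "natabs c = (if even c then c div 2 else (c + 1) div 2)"

lemma rcomp_natabs: "rcomp k f \<Longrightarrow> rcomp k (\<lambda>xs. natabs (f xs))"
  unfolding natabs_def by (intro rcomp_if bcomp_even rcomp_div rcomp_add rcomp_const)

lemma icomp_dec: "rcomp k f \<Longrightarrow> icomp k (\<lambda>xs. dec (f xs))"
proof -
  assume f: "rcomp k f"
  have "icomp k (\<lambda>xs. if even (f xs) then int (f xs div 2) else int 0 - int ((f xs + 1) div 2))"
    by (intro icomp_if icomp_sub icomp_nat bcomp_even rcomp_div rcomp_add rcomp_const f)
  then show ?thesis by (rule icomp_cong) (simp add: dec_def)
qed

definition goodP :: "(nat \<Rightarrow> (nat \<Rightarrow> bool) \<Rightarrow> bool) \<Rightarrow> nat \<Rightarrow> (nat \<Rightarrow> bool) \<Rightarrow> bool" where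
  "goodP C n f \<longleftrightarrow> (\<forall>m\<ge>n. \<exists>g. (\<forall>i<n. g i = f i) \<and> C m g)"

primrec kseq :: "(nat \<Rightarrow> (nat \<Rightarrow> bool) \<Rightarrow> bool) \<Rightarrow> nat \<Rightarrow> nat \<Rightarrow> bool" where
  "kseq C 0 = (\<lambda>_. False)"
| "kseq C (Suc n) = (if goodP C (Suc n) ((kseq C n)(n := True)) then (kseq C n)(n := True)
                     else (kseq C n)(n := False))"

lemma not_goodP:
  assumes "\<not> goodP C n f"
  obtains m where "m \<ge> n" "\<And>g. \<forall>i<n. g i = f i \<Longrightarrow> \<not> C m g"
  using assms unfolding goodP_def by blast

lemma konig:
  fixes C :: "nat \<Rightarrow> (nat \<Rightarrow> bool) \<Rightarrow> bool"
  assumes pre: "\<And>n f g. (\<forall>i<n. f i = g i) \<Longrightarrow> C n f = C n g"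
    and cl: "\<And>n f. C (Suc n) f \<Longrightarrow> C n f"
    and all: "\<And>n. \<exists>f. C n f"
  shows "\<exists>f. \<forall>n. C n f"
proof -
  have mono: "C m f" if "m \<le> n" "C n f" for m n f
    using that
  proof (induction n)
    case 0 then show ?case by simp
  next
    case (Suc n)
    show ?case
    proof (cases "m = Suc n")
      case True then show ?thesis using Suc.prems by simp
    next
      case False
      then have "m \<le> n" using Suc.prems by simp
      moreover have "C n f" using cl Suc.prems by blast
      ultimately show ?thesis by (rule Suc.IH)
    qed
  qed
  have step: "goodP C (Suc n) (f(n := True)) \<or> goodP C (Suc n) (f(n := False))"
    if g: "goodP C n f" for n f
  proof (rule ccontr)
    assume "\<not> ?thesis"
    then have n1: "\<not> goodP C (Suc n) (f(n := True))" and n2: "\<not> goodP C (Suc n) (f(n := False))"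
      by simp_all
    obtain m1 where m1: "m1 \<ge> Suc n" "\<And>g. \<forall>i<Suc n. g i = (f(n := True)) i \<Longrightarrow> \<not> C m1 g"
      using n1 by (rule not_goodP) blast
    obtain m2 where m2: "m2 \<ge> Suc n" "\<And>g. \<forall>i<Suc n. g i = (f(n := False)) i \<Longrightarrow> \<not> C m2 g"
      using n2 by (rule not_goodP) blast
    define m where "m = max m1 m2"
    have "m \<ge> n" using m1 unfolding m_def by simp
    then obtain h where h: "\<forall>i<n. h i = f i" "C m h" using g unfolding goodP_def by blast
    have m1m: "m1 \<le> m" and m2m: "m2 \<le> m" unfolding m_def by simp_all
    show False
    proof (cases "h n")
      case True
      then have "\<forall>i<Suc n. h i = (f(n := True)) i" using h(1) by (simp add: less_Suc_eq)
      moreover have "C m1 h" using mono[OF m1m h(2)] .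
      ultimately show False using m1(2) by blast
    next
      case False
      then have "\<forall>i<Suc n. h i = (f(n := False)) i" using h(1) by (simp add: less_Suc_eq)
      moreover have "C m2 h" using mono[OF m2m h(2)] .
      ultimately show False using m2(2) by blast
    qed
  qed
  define fs where "fs = kseq C"
  have good: "goodP C n (fs n)" for n
  proof (induction n)
    case 0
    show ?case unfolding goodP_def
    proof (intro allI impI)
      fix m :: nat
      obtain g where "C m g" using all by blast
      then show "\<exists>g. (\<forall>i<0. g i = fs 0 i) \<and> C m g" by blast
    qed
  next
    case (Suc n)
    have fsS: "fs (Suc n) = (if goodP C (Suc n) ((fs n)(n := True)) then (fs n)(n := True) else (fs n)(n := False))"
      unfolding fs_def by simp
    show ?case
    proof (cases "goodP C (Suc n) ((fs n)(n := True))")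
      case True
      show ?thesis unfolding fsS if_P[OF True] by (rule True)
    next
      case False
      then show ?thesis using step[OF Suc] unfolding fsS if_not_P[OF False] by blast
    qed
  qed
  have fs_suc: "fs (Suc m) i = fs m i" if "i < m" for m i
    using that unfolding fs_def by simp
  have agree: "fs m i = fs n i" if "n \<le> m" "i < n" for m n i
    using that
  proof (induction m)
    case 0 then show ?case by simp
  next
    case (Suc m)
    show ?case
    proof (cases "n = Suc m")
      case False
      then have "n \<le> m" using Suc.prems by simp
      then have "fs m i = fs n i" using Suc.IH Suc.prems by simp
      moreover have "i < m" using \<open>n \<le> m\<close> Suc.prems by simp
      ultimately show ?thesis using fs_suc by simp
    qed simp
  qed
  define w where "w i = fs (Suc i) i" for i
  have "C n w" for n
  proof -
    obtain h where h: "\<forall>i<n. h i = fs n i" "C n h" using good[of n] unfolding goodP_def by blast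
    have "\<forall>i<n. h i = w i"
    proof (intro allI impI)
      fix i assume "i < n"
      then have "fs n i = fs (Suc i) i" by (intro agree) simp_all
      then show "h i = w i" using h(1) \<open>i < n\<close> unfolding w_def by simp
    qed
    then show ?thesis using pre h(2) by blast
  qed
  then show ?thesis by blast
qed

definition Wd :: "real \<Rightarrow> real \<Rightarrow> (nat \<Rightarrow> bool) \<Rightarrow> nat \<Rightarrow> real" where
  "Wd a b f i = (if f i then a else b)"

definition Sn :: "real \<Rightarrow> real \<Rightarrow> real \<Rightarrow> (nat \<Rightarrow> bool) \<Rightarrow> nat \<Rightarrow> real" where
  "Sn lam a b f n = (\<Sum>i<n. Wd a b f i * lam ^ i)"

definition Cn :: "real \<Rightarrow> real \<Rightarrow> real \<Rightarrow> real \<Rightarrow> nat \<Rightarrow> (nat \<Rightarrow> bool) \<Rightarrow> bool" where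
  "Cn lam t a b n f \<longleftrightarrow>
     ((t - Sn lam a b f n) * (1 - lam) - lam ^ n * a) * ((t - Sn lam a b f n) * (1 - lam) - lam ^ n * b) \<le> 0"

lemma between_iff: "((z::real) - x) * (z - y) \<le> 0 \<longleftrightarrow> (x \<le> z \<and> z \<le> y) \<or> (y \<le> z \<and> z \<le> x)"
  by (auto simp: mult_le_0_iff)

lemma Cn_pre: "(\<forall>i<n. f i = g i) \<Longrightarrow> Cn lam t a b n f = Cn lam t a b n g"
proof -
  assume "\<forall>i<n. f i = g i"
  then have "Sn lam a b f n = Sn lam a b g n" unfolding Sn_def Wd_def by (intro sum.cong) auto
  then show ?thesis unfolding Cn_def by simp
qed

lemma Cn_Suc:
  assumes lam: "0 < lam" "lam < 1" and c: "Cn lam t a b (Suc n) f"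
  shows "Cn lam t a b n f"
proof -
  define L where "L = lam ^ n"
  have L: "L > 0" unfolding L_def using lam by simp
  define c where "c = Wd a b f n"
  define Z' where "Z' = (t - Sn lam a b f (Suc n)) * (1 - lam)"
  have Z: "(t - Sn lam a b f n) * (1 - lam) = Z' + L * (1 - lam) * c"
    unfolding Z'_def L_def c_def Sn_def by (simp add: algebra_simps)
  have c': "(Z' - lam * L * a) * (Z' - lam * L * b) \<le> 0" using c unfolding Cn_def Z'_def L_def
    by (simp add: mult.assoc)
  have cab: "c = a \<or> c = b" unfolding c_def Wd_def by auto
  have pos: "L * (1 - lam) \<ge> 0" using L lam by simp
  have lL: "lam * L \<ge> 0" using L lam by simp
  have ida: "lam * L * a + L * (1 - lam) * a = L * a" and idb: "lam * L * b + L * (1 - lam) * b = L * b"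
    by (simp_all add: algebra_simps)
  have "(Z' + L * (1 - lam) * c - L * a) * (Z' + L * (1 - lam) * c - L * b) \<le> 0"
  proof (cases "a \<le> b")
    case True
    have "lam * L * a \<le> lam * L * b" using True lL by (intro mult_left_mono) auto
    then have z: "lam * L * a \<le> Z' \<and> Z' \<le> lam * L * b"
      using c' unfolding between_iff by linarith
    have "L * (1 - lam) * a \<le> L * (1 - lam) * c" "L * (1 - lam) * c \<le> L * (1 - lam) * b"
      using cab True pos by (auto intro: mult_left_mono)
    then show ?thesis unfolding between_iff using z ida idb by linarith
  next
    case False
    have "lam * L * b \<le> lam * L * a" using False lL by (intro mult_left_mono) auto
    then have z: "lam * L * b \<le> Z' \<and> Z' \<le> lam * L * a"
      using c' unfolding between_iff by linarith
    have "L * (1 - lam) * b \<le> L * (1 - lam) * c" "L * (1 - lam) * c \<le> L * (1 - lam) * a"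
      using cab False pos by (auto intro: mult_left_mono)
    then show ?thesis unfolding between_iff using z ida idb by linarith
  qed
  then show ?thesis unfolding Cn_def Z L_def by simp
qed

lemma sol_Cn:
  assumes lam: "0 < lam" "lam < 1" and s: "(\<lambda>i. Wd a b f i * lam ^ i) sums t"
  shows "Cn lam t a b n f"
proof -
  have "(\<lambda>i. Wd a b f (i + n) * lam ^ (i + n)) sums (t - Sn lam a b f n)"
    using sums_split_initial_segment[OF s, of n] unfolding Sn_def by simp
  then have "(\<lambda>i. lam ^ n * (Wd a b f (i + n) * lam ^ i)) sums (t - Sn lam a b f n)"
    by (simp add: power_add mult_ac)
  from sums_divide[OF this, of "lam ^ n"]
  have "(\<lambda>i. Wd a b f (i + n) * lam ^ i) sums ((t - Sn lam a b f n) / lam ^ n)"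
    using lam by simp
  define T where "T = (t - Sn lam a b f n) / lam ^ n"
  have sT: "(\<lambda>i. Wd a b f (i + n) * lam ^ i) sums T"
    using \<open>(\<lambda>i. Wd a b f (i + n) * lam ^ i) sums _\<close> unfolding T_def .
  have geo: "(\<lambda>i. x * lam ^ i) sums (x / (1 - lam))" for x
    using sums_mult[OF geometric_sums[of lam], of x] lam by simp
  have lp: "lam ^ i \<ge> 0" for i using lam by simp
  have lo: "min a b / (1 - lam) \<le> T"
  proof (rule sums_le[OF _ geo sT])
    fix i
    have "min a b \<le> Wd a b f (i + n)" by (simp add: Wd_def)
    then show "min a b * lam ^ i \<le> Wd a b f (i + n) * lam ^ i" using lp by (rule mult_right_mono)
  qed
  have hi: "T \<le> max a b / (1 - lam)"
  proof (rule sums_le[OF _ sT geo])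
    fix i
    have "Wd a b f (i + n) \<le> max a b" by (simp add: Wd_def)
    then show "Wd a b f (i + n) * lam ^ i \<le> max a b * lam ^ i" using lp by (rule mult_right_mono)
  qed
  have tS: "t - Sn lam a b f n = lam ^ n * T" unfolding T_def using lam by simp
  define V where "V = T * (1 - lam)"
  have mi: "min a b \<le> V" using lo lam unfolding V_def by (simp add: pos_divide_le_eq)
  have ma: "V \<le> max a b" using hi lam unfolding V_def by (simp add: pos_le_divide_eq)
  have "(a \<le> V \<and> V \<le> b) \<or> (b \<le> V \<and> V \<le> a)"
    using mi ma by (cases "a \<le> b") (simp_all add: min_def max_def)
  then have vv: "(V - a) * (V - b) \<le> 0" unfolding between_iff .
  have le: "(lam ^ n * lam ^ n) * ((V - a) * (V - b)) \<le> 0"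
    by (rule mult_nonneg_nonpos[OF _ vv]) (use lam in simp)
  have eq: "(t - Sn lam a b f n) * (1 - lam) - lam ^ n * x = lam ^ n * (V - x)" for x
    unfolding tS V_def by (simp add: algebra_simps)
  have eq2: "lam ^ n * (V - a) * (lam ^ n * (V - b)) = (lam ^ n * lam ^ n) * ((V - a) * (V - b))"
    by (simp only: mult_ac)
  show ?thesis unfolding Cn_def eq eq2 by (rule le)
qed

lemma Cn_sol:
  assumes lam: "0 < lam" "lam < 1" and c: "\<forall>n. Cn lam t a b n f"
  shows "(\<lambda>i. Wd a b f i * lam ^ i) sums t"
proof -
  define K where "K = (\<bar>a\<bar> + \<bar>b\<bar>) / (1 - lam)"
  have bnd: "norm (Sn lam a b f n - t) \<le> norm (lam ^ n) * K" for n
  proof -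
    define Z where "Z = (t - Sn lam a b f n) * (1 - lam)"
    have "(Z - lam ^ n * a) * (Z - lam ^ n * b) \<le> 0" using c unfolding Cn_def Z_def by simp
    then have "\<bar>Z\<bar> \<le> \<bar>lam ^ n * a\<bar> + \<bar>lam ^ n * b\<bar>" unfolding between_iff by linarith
    also have "\<dots> = lam ^ n * (\<bar>a\<bar> + \<bar>b\<bar>)" using lam by (simp add: abs_mult distrib_left)
    finally have "\<bar>t - Sn lam a b f n\<bar> * (1 - lam) \<le> lam ^ n * (\<bar>a\<bar> + \<bar>b\<bar>)"
      unfolding Z_def using lam by (simp add: abs_mult)
    then have "\<bar>t - Sn lam a b f n\<bar> \<le> lam ^ n * (\<bar>a\<bar> + \<bar>b\<bar>) / (1 - lam)"
      using lam by (simp add: pos_le_divide_eq)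
    then show ?thesis unfolding K_def using lam by (simp add: abs_minus_commute)
  qed
  have "(\<lambda>n. lam ^ n) \<longlonglongrightarrow> 0"
    by (rule LIMSEQ_power_zero) (use lam in simp)
  then have "(\<lambda>n. Sn lam a b f n - t) \<longlonglongrightarrow> 0"
    by (rule tendsto_0_le[where K = K]) (use bnd in simp)
  then have "(\<lambda>n. Sn lam a b f n) \<longlonglongrightarrow> t" by (rule LIM_zero_cancel)
  then show ?thesis unfolding sums_def Sn_def .
qed

theorem tds_char:
  assumes lam: "0 < lam" "lam < 1"
  shows "(\<exists>f. (\<lambda>i. Wd a b f i * lam ^ i) sums t) \<longleftrightarrow> (\<forall>n. \<exists>f. Cn lam t a b n f)"
proof
  assume "\<exists>f. (\<lambda>i. Wd a b f i * lam ^ i) sums t"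
  then show "\<forall>n. \<exists>f. Cn lam t a b n f" using sol_Cn[OF lam] by blast
next
  assume "\<forall>n. \<exists>f. Cn lam t a b n f"
  then have "\<exists>f. \<forall>n. Cn lam t a b n f"
  proof (intro konig)
    show "\<And>n f g. \<forall>i<n. f i = g i \<Longrightarrow> Cn lam t a b n f = Cn lam t a b n g" by (rule Cn_pre)
    show "\<And>n f. Cn lam t a b (Suc n) f \<Longrightarrow> Cn lam t a b n f" by (rule Cn_Suc[OF lam])
  qed blast
  then show "\<exists>f. (\<lambda>i. Wd a b f i * lam ^ i) sums t" using Cn_sol[OF lam] by blast
qed

definition RwI :: "nat \<Rightarrow> (nat \<Rightarrow> bool) \<Rightarrow> nat \<Rightarrow> nat \<Rightarrow> int \<Rightarrow> nat \<Rightarrow> int \<Rightarrow> nat \<Rightarrow> int" where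
  "RwI n f p q a1 a2 b1 b2 = (\<Sum>i<n. (if f i then a1 * int b2 else b1 * int a2) * int (p ^ i * q ^ (n - i)))"

definition YI :: "nat \<Rightarrow> (nat \<Rightarrow> bool) \<Rightarrow> nat \<Rightarrow> nat \<Rightarrow> int \<Rightarrow> nat \<Rightarrow> int \<Rightarrow> nat \<Rightarrow> int \<Rightarrow> nat \<Rightarrow> int" where
  "YI n f p q t1 t2 a1 a2 b1 b2 = (t1 * int (a2 * b2 * q ^ n) - int t2 * RwI n f p q a1 a2 b1 b2) * (int q - int p)"

definition consI :: "nat \<Rightarrow> (nat \<Rightarrow> bool) \<Rightarrow> nat \<Rightarrow> nat \<Rightarrow> int \<Rightarrow> nat \<Rightarrow> int \<Rightarrow> nat \<Rightarrow> int \<Rightarrow> nat \<Rightarrow> bool" where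
  "consI n f p q t1 t2 a1 a2 b1 b2 \<longleftrightarrow>
     (YI n f p q t1 t2 a1 a2 b1 b2 - int (p ^ n * q * t2 * b2) * a1) *
     (YI n f p q t1 t2 a1 a2 b1 b2 - int (p ^ n * q * t2 * a2) * b1) \<le> 0"

lemma consI_pre: "(\<forall>i<n. f i = g i) \<Longrightarrow> consI n f p q t1 t2 a1 a2 b1 b2 = consI n g p q t1 t2 a1 a2 b1 b2"
proof -
  assume "\<forall>i<n. f i = g i"
  then have "RwI n f p q a1 a2 b1 b2 = RwI n g p q a1 a2 b1 b2" unfolding RwI_def by (intro sum.cong) auto
  then show ?thesis unfolding consI_def YI_def by simp
qed

lemma RwI_real:
  assumes "q > 0" "a2 > 0" "b2 > 0"
  shows "real_of_int (RwI n f p q a1 a2 b1 b2) =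
     real a2 * real b2 * real q ^ n * Sn (real p / real q) (real_of_int a1 / real a2) (real_of_int b1 / real b2) f n"
  unfolding RwI_def Sn_def sum_distrib_left of_int_sum
proof (intro sum.cong refl)
  fix i assume "i \<in> {..<n}"
  then have "real q ^ n = real q ^ (n - i) * real q ^ i" by (simp add: power_add[symmetric])
  then show "real_of_int ((if f i then a1 * int b2 else b1 * int a2) * int (p ^ i * q ^ (n - i))) =
      real a2 * real b2 * real q ^ n * (Wd (real_of_int a1 / real a2) (real_of_int b1 / real b2) f i * (real p / real q) ^ i)"
    using assms by (simp add: Wd_def field_simps power_divide)
qed

lemma consI_Cn:
  assumes q: "q > 0" and pos: "t2 > 0" "a2 > 0" "b2 > 0"
  shows "consI n f p q t1 t2 a1 a2 b1 b2 \<longleftrightarrow>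
    Cn (real p / real q) (real_of_int t1 / real t2) (real_of_int a1 / real a2) (real_of_int b1 / real b2) n f"
proof -
  define lam where "lam = real p / real q"
  define t where "t = real_of_int t1 / real t2"
  define a where "a = real_of_int a1 / real a2"
  define b where "b = real_of_int b1 / real b2"
  define S where "S = Sn lam a b f n"
  define K where "K = real t2 * real a2 * real b2 * real q ^ Suc n"
  define Z where "Z = (t - S) * (1 - lam)"
  have K: "K > 0" unfolding K_def using q pos by simp
  have R: "real_of_int (RwI n f p q a1 a2 b1 b2) = real a2 * real b2 * real q ^ n * S"
    unfolding S_def lam_def a_def b_def using RwI_real q pos by simp
  have Y0: "real_of_int (YI n f p q t1 t2 a1 a2 b1 b2) =
    (real_of_int t1 * (real a2 * real b2 * real q ^ n) - real t2 * real_of_int (RwI n f p q a1 a2 b1 b2)) * (real q - real p)"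
    by (simp add: YI_def)
  have Y: "real_of_int (YI n f p q t1 t2 a1 a2 b1 b2) = K * Z"
    unfolding Y0 R Z_def K_def t_def lam_def using q pos by (simp add: field_simps)
  have Xa: "real_of_int (YI n f p q t1 t2 a1 a2 b1 b2 - int (p ^ n * q * t2 * b2) * a1) = K * (Z - lam ^ n * a)"
    unfolding of_int_diff Y using q pos by (simp add: K_def lam_def a_def field_simps power_divide)
  have Xb: "real_of_int (YI n f p q t1 t2 a1 a2 b1 b2 - int (p ^ n * q * t2 * a2) * b1) = K * (Z - lam ^ n * b)"
    unfolding of_int_diff Y using q pos by (simp add: K_def lam_def b_def field_simps power_divide)
  have "consI n f p q t1 t2 a1 a2 b1 b2 \<longleftrightarrow> K * (Z - lam ^ n * a) * (K * (Z - lam ^ n * b)) \<le> 0"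
    unfolding consI_def Xa[symmetric] Xb[symmetric] of_int_mult[symmetric] by linarith
  also have "\<dots> \<longleftrightarrow> (K * K) * ((Z - lam ^ n * a) * (Z - lam ^ n * b)) \<le> 0"
    by (simp add: algebra_simps)
  also have "\<dots> \<longleftrightarrow> (Z - lam ^ n * a) * (Z - lam ^ n * b) \<le> 0"
    using K by (simp add: mult_le_0_iff)
  finally show ?thesis unfolding Cn_def Z_def S_def lam_def t_def a_def b_def by simp
qed

lemma map_Suc_tl': "length ys = Suc k \<Longrightarrow> map (\<lambda>j. ys ! Suc j) [0..<k] = tl ys"
  using map_Suc_tl[of ys] by simp

lemma rcomp_tl: "rcomp k f \<Longrightarrow> rcomp (Suc k) (\<lambda>ys. f (tl ys))"
proof -
  assume "rcomp k f"
  then have "rcomp (Suc k) (\<lambda>ys. f (map (\<lambda>j. ys ! Suc j) [0..<k]))"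
    by (rule rcomp_reindex) auto
  then show ?thesis by (rule rcomp_cong) (simp add: map_Suc_tl')
qed

lemma icomp_tl: "icomp k f \<Longrightarrow> icomp (Suc k) (\<lambda>ys. f (tl ys))"
  unfolding icomp_def
proof (elim exE conjE)
  fix P N assume "rcomp k P" "rcomp k N" "\<forall>xs. length xs = k \<longrightarrow> f xs = int (P xs) - int (N xs)"
  then show "\<exists>P N. rcomp (Suc k) P \<and> rcomp (Suc k) N \<and>
      (\<forall>xs. length xs = Suc k \<longrightarrow> f (tl xs) = int (P xs) - int (N xs))"
    by (intro exI[of _ "\<lambda>ys. P (tl ys)"] exI[of _ "\<lambda>ys. N (tl ys)"]) (auto intro: rcomp_tl)
qed

lemma bcomp_comp2:
  assumes "bcomp 2 Q" "rcomp k f" "rcomp k g"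
  shows "bcomp k (\<lambda>xs. Q [f xs, g xs])"
  using rcomp_comp2[OF assms[unfolded bcomp_def]] unfolding bcomp_def by simp

lemma icomp_RwI:
  assumes "rcomp k N" "rcomp k U" "rcomp k P" "rcomp k Q" "icomp k A1" "rcomp k A2" "icomp k B1" "rcomp k B2"
  shows "icomp k (\<lambda>xs. RwI (N xs) (\<lambda>i. odd (U xs div 2 ^ i)) (P xs) (Q xs) (A1 xs) (A2 xs) (B1 xs) (B2 xs))"
proof -
  note tl = rcomp_tl[OF assms(1)] rcomp_tl[OF assms(2)] rcomp_tl[OF assms(3)] rcomp_tl[OF assms(4)]
    icomp_tl[OF assms(5)] rcomp_tl[OF assms(6)] icomp_tl[OF assms(7)] rcomp_tl[OF assms(8)]
  have "icomp (Suc k) (\<lambda>ys. (if odd (U (tl ys) div 2 ^ (ys!0)) then A1 (tl ys) * int (B2 (tl ys)) else B1 (tl ys) * int (A2 (tl ys)))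
           * int (P (tl ys) ^ (ys!0) * Q (tl ys) ^ (N (tl ys) - ys!0)))"
    by (intro icomp_mult icomp_if icomp_nat bcomp_not bcomp_even rcomp_div rcomp_pow rcomp_mult rcomp_sub
        rcomp_const rcomp_proj tl) simp_all
  then have "icomp k (\<lambda>xs. \<Sum>i<N xs. (\<lambda>ys. (if odd (U (tl ys) div 2 ^ (ys!0)) then A1 (tl ys) * int (B2 (tl ys)) else B1 (tl ys) * int (A2 (tl ys)))
           * int (P (tl ys) ^ (ys!0) * Q (tl ys) ^ (N (tl ys) - ys!0))) (i # xs))"
    by (rule icomp_sum) (rule assms(1))
  then show ?thesis by (rule icomp_cong) (simp only: list.sel nth_Cons_0, simp add: RwI_def)
qed

lemma bcomp_consI:
  assumes "rcomp k N" "rcomp k U" "rcomp k P" "rcomp k Q" "icomp k T1" "rcomp k T2"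
    "icomp k A1" "rcomp k A2" "icomp k B1" "rcomp k B2"
  shows "bcomp k (\<lambda>xs. consI (N xs) (\<lambda>i. odd (U xs div 2 ^ i)) (P xs) (Q xs) (T1 xs) (T2 xs) (A1 xs) (A2 xs) (B1 xs) (B2 xs))"
proof -
  have R: "icomp k (\<lambda>xs. RwI (N xs) (\<lambda>i. odd (U xs div 2 ^ i)) (P xs) (Q xs) (A1 xs) (A2 xs) (B1 xs) (B2 xs))"
    using assms by (intro icomp_RwI)
  have Y: "icomp k (\<lambda>xs. YI (N xs) (\<lambda>i. odd (U xs div 2 ^ i)) (P xs) (Q xs) (T1 xs) (T2 xs) (A1 xs) (A2 xs) (B1 xs) (B2 xs))"
    unfolding YI_def
    by (intro icomp_mult icomp_sub icomp_nat rcomp_mult rcomp_pow R assms)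
  show ?thesis unfolding consI_def
    by (intro bcomp_ile icomp_mult icomp_sub icomp_nat rcomp_mult rcomp_pow Y assms)
qed

lemma dec_int_code: "dec (int_code z) = z"
proof (cases "z \<ge> 0")
  case True
  then have "int_code z = nat (2 * z)" unfolding int_code_def by simp
  moreover have "even (nat (2 * z))" using True by (simp add: even_nat_iff)
  moreover have "nat (2 * z) div 2 = nat z" using True by simp
  ultimately show ?thesis using True unfolding dec_def by simp
next
  case False
  then have "int_code z = nat (- 2 * z - 1)" unfolding int_code_def by simp
  moreover have "odd (nat (- 2 * z - 1))" using False by (simp add: even_nat_iff)
  moreover have "(nat (- 2 * z - 1) + 1) div 2 = nat (- z)" using False by simp
  ultimately show ?thesis using False unfolding dec_def by simp
qed

lemma int_code_dec: "int_code (dec c) = c"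
proof (cases "even c")
  case True
  then show ?thesis unfolding dec_def int_code_def by auto
next
  case False
  then have "(c + 1) div 2 \<ge> 1" by presburger
  moreover have "2 * ((c + 1) div 2) = c + 1" using False by presburger
  moreover have e: "int c = 1 + 2 * int (c div 2)" using False by presburger
  ultimately show ?thesis using False unfolding dec_def int_code_def by (auto simp flip: e)
qed

lemma natabs_dec: "int (natabs c) = \<bar>dec c\<bar>"
  unfolding natabs_def dec_def by auto

lemma dec_pos_iff: "dec c > 0 \<longleftrightarrow> even c \<and> 0 < c"
  unfolding dec_def by auto

lemma dec_even: "even c \<Longrightarrow> dec c = int (c div 2)"
  unfolding dec_def by simp

definition vpair :: "nat \<Rightarrow> nat \<Rightarrow> bool" where
  "vpair c1 c2 \<longleftrightarrow> even c2 \<and> 0 < c2 \<and>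
     (\<forall>e < c2 div 2 + 1. e dvd natabs c1 \<and> e dvd c2 div 2 \<longrightarrow> e = 1)"

lemma coprime_bounded:
  assumes "(d::nat) > 0"
  shows "coprime x d \<longleftrightarrow> (\<forall>e < d + 1. e dvd x \<and> e dvd d \<longrightarrow> e = 1)"
proof
  assume c: "coprime x d"
  show "\<forall>e < d + 1. e dvd x \<and> e dvd d \<longrightarrow> e = 1"
  proof (intro allI impI)
    fix e assume "e < d + 1" "e dvd x \<and> e dvd d"
    then show "e = 1" using c coprime_common_divisor_nat by blast
  qed
next
  assume h: "\<forall>e < d + 1. e dvd x \<and> e dvd d \<longrightarrow> e = 1"
  have "gcd x d \<le> d" using assms by simp
  then have "gcd x d < d + 1" by simp
  moreover have "gcd x d dvd x \<and> gcd x d dvd d" by simp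
  ultimately have "gcd x d = 1" using h by blast
  then show "coprime x d" by (simp only: coprime_iff_gcd_eq_1)
qed

lemma vpair_iff: "vpair c1 c2 \<longleftrightarrow> dec c2 > 0 \<and> coprime (dec c1) (dec c2)"
proof (cases "even c2 \<and> 0 < c2")
  case True
  have d1: "dec c2 = int (c2 div 2)" using True by (simp add: dec_even)
  have d2: "c2 div 2 > 0" using True by (auto elim!: evenE)
  note d = d1 d2
  have "coprime (dec c1) (dec c2) \<longleftrightarrow> coprime \<bar>dec c1\<bar> (int (c2 div 2))"
    unfolding d(1) by (simp only: coprime_abs_left_iff)
  also have "\<dots> \<longleftrightarrow> coprime (natabs c1) (c2 div 2)" by (simp only: natabs_dec[symmetric] coprime_int_iff)
  also have "\<dots> \<longleftrightarrow> (\<forall>e < c2 div 2 + 1. e dvd natabs c1 \<and> e dvd c2 div 2 \<longrightarrow> e = 1)"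
    using d by (intro coprime_bounded)
  finally have cp: "coprime (dec c1) (dec c2) \<longleftrightarrow> (\<forall>e < c2 div 2 + 1. e dvd natabs c1 \<and> e dvd c2 div 2 \<longrightarrow> e = 1)" .
  have v: "vpair c1 c2 \<longleftrightarrow> (\<forall>e < c2 div 2 + 1. e dvd natabs c1 \<and> e dvd c2 div 2 \<longrightarrow> e = 1)"
    using True unfolding vpair_def by (simp only: simp_thms)
  have dp: "dec c2 > 0" using True dec_pos_iff by (simp only:)
  show ?thesis using v dp cp by (simp only: simp_thms)
next
  case False
  have "\<not> vpair c1 c2" using False unfolding vpair_def by blast
  moreover have "\<not> dec c2 > 0" using False dec_pos_iff by blast
  ultimately show ?thesis by blast
qed

lemma rat_code_iff: "rat_code q = [c1, c2] \<longleftrightarrow> quotient_of q = (dec c1, dec c2)"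
proof -
  have "rat_code q = [c1, c2] \<longleftrightarrow> int_code (fst (quotient_of q)) = c1 \<and> int_code (snd (quotient_of q)) = c2"
    unfolding rat_code_def by simp
  also have "\<dots> \<longleftrightarrow> fst (quotient_of q) = dec c1 \<and> snd (quotient_of q) = dec c2"
    by (metis dec_int_code int_code_dec)
  also have "\<dots> \<longleftrightarrow> quotient_of q = (dec c1, dec c2)" by (simp add: prod_eq_iff)
  finally show ?thesis .
qed

lemma ex_rat_code: "(\<exists>q. rat_code q = [c1, c2]) \<longleftrightarrow> vpair c1 c2"
proof
  assume "\<exists>q. rat_code q = [c1, c2]"
  then obtain q where "quotient_of q = (dec c1, dec c2)" using rat_code_iff by blast
  then show "vpair c1 c2" unfolding vpair_iff using quotient_of_denom_pos quotient_of_coprime by blast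
next
  assume "vpair c1 c2"
  then have "dec c2 > 0" "coprime (dec c1) (dec c2)" unfolding vpair_iff by auto
  then have "quotient_of (Fract (dec c1) (dec c2)) = (dec c1, dec c2)"
    by (simp add: quotient_of_Fract)
  then show "\<exists>q. rat_code q = [c1, c2]" using rat_code_iff by blast
qed

lemma rat_code_val: "rat_code q = [c1, c2] \<Longrightarrow> real_of_rat q = real_of_int (dec c1) / real_of_int (dec c2)"
  using quotient_of_div[of q "dec c1" "dec c2"] rat_code_iff by (simp add: of_rat_divide)

lemma rat_code_pos: "rat_code q = [c1, c2] \<Longrightarrow> dec c2 > 0"
  using ex_rat_code vpair_iff by blast

lemma bits_surj: "\<exists>u<2^n. \<forall>i<n. odd ((u::nat) div 2 ^ i) = f i"
proof (induction n)
  case 0 then show ?case by auto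
next
  case (Suc n)
  then obtain u :: nat where u: "u < 2 ^ n" "\<forall>i<n. odd (u div 2 ^ i) = f i" by blast
  define u' where "u' = u + (if f n then 2 ^ n else 0)"
  have "u' < 2 ^ Suc n" using u unfolding u'_def by auto
  moreover have "odd (u' div 2 ^ i) = f i" if "i < Suc n" for i
  proof (cases "i < n")
    case True
    have "(2::nat) ^ n = 2 ^ i * 2 ^ (n - i)" using True by (simp flip: power_add)
    then have "u' div 2 ^ i = u div 2 ^ i + (if f n then 2 ^ (n - i) else 0)"
      unfolding u'_def by simp
    moreover have "even ((2::nat) ^ (n - i))" using True by simp
    ultimately show ?thesis using u(2) True by auto
  next
    case False
    then have "i = n" using that by simp
    moreover have "u div 2 ^ n = 0" using u(1) by simp
    moreover have "(u + 2 ^ n) div 2 ^ n = 1" using u(1) by (simp add: div_add_self2)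
    ultimately show ?thesis unfolding u'_def by auto
  qed
  ultimately show ?case by blast
qed

lemma sol_iff:
  "(\<exists>w. tds_solution lam t a b w) \<longleftrightarrow>
   (\<exists>f. (\<lambda>i. Wd (real_of_rat a) (real_of_rat b) f i * real_of_rat lam ^ i) sums real_of_rat t)"
proof
  assume "\<exists>w. tds_solution lam t a b w"
  then obtain w where w: "\<forall>i. w i \<in> {a, b}" "(\<lambda>i. real_of_rat (w i) * real_of_rat lam ^ i) sums real_of_rat t"
    unfolding tds_solution_def by blast
  have "Wd (real_of_rat a) (real_of_rat b) (\<lambda>i. w i = a) i = real_of_rat (w i)" for i
    using w(1)[rule_format, of i] unfolding Wd_def by auto
  then show "\<exists>f. (\<lambda>i. Wd (real_of_rat a) (real_of_rat b) f i * real_of_rat lam ^ i) sums real_of_rat t"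
    using w(2) by (intro exI[of _ "\<lambda>i. w i = a"]) simp
next
  assume "\<exists>f. (\<lambda>i. Wd (real_of_rat a) (real_of_rat b) f i * real_of_rat lam ^ i) sums real_of_rat t"
  then obtain f where f: "(\<lambda>i. Wd (real_of_rat a) (real_of_rat b) f i * real_of_rat lam ^ i) sums real_of_rat t"
    by blast
  define w where "w i = (if f i then a else b)" for i
  have "real_of_rat (w i) = Wd (real_of_rat a) (real_of_rat b) f i" for i
    unfolding w_def Wd_def by simp
  then have "tds_solution lam t a b w" unfolding tds_solution_def using f by (simp add: w_def)
  then show "\<exists>w. tds_solution lam t a b w" by blast
qed

lemma ex_bits: "(\<exists>f. consI n f p q t1 t2 a1 a2 b1 b2) \<longleftrightarrow>
   (\<exists>u<2^n. consI n (\<lambda>i. odd ((u::nat) div 2 ^ i)) p q t1 t2 a1 a2 b1 b2)"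
proof
  assume "\<exists>f. consI n f p q t1 t2 a1 a2 b1 b2"
  then obtain f where f: "consI n f p q t1 t2 a1 a2 b1 b2" by blast
  obtain u :: nat where u: "u < 2 ^ n" "\<forall>i<n. odd (u div 2 ^ i) = f i" using bits_surj by blast
  then show "\<exists>u<2^n. consI n (\<lambda>i. odd ((u::nat) div 2 ^ i)) p q t1 t2 a1 a2 b1 b2"
    using f consI_pre[of n "\<lambda>i. odd (u div 2 ^ i)" f] by blast
qed blast

lemma key:
  assumes c: "rat_code lam = [l1, l2]" "rat_code t = [t1, t2]" "rat_code a = [a1, a2]" "rat_code b = [b1, b2]"
    and p: "0 < dec l1" "dec l1 < dec l2"
  shows "(\<exists>w. tds_solution lam t a b w) \<longleftrightarrow>
    (\<forall>n. \<exists>u<2^n. consI n (\<lambda>i. odd ((u::nat) div 2 ^ i)) (natabs l1) (natabs l2) (dec t1) (natabs t2)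
                     (dec a1) (natabs a2) (dec b1) (natabs b2))"
proof -
  have pos: "dec l2 > 0" "dec t2 > 0" "dec a2 > 0" "dec b2 > 0" using c rat_code_pos by blast+
  have na: "dec c = int (natabs c)" if "dec c > 0" for c using that natabs_dec[of c] by simp
  have r: "real_of_rat lam = real (natabs l1) / real (natabs l2)"
    using rat_code_val[OF c(1)] na[OF p(1)] na[OF pos(1)] by simp
  have rt: "real_of_rat t = real_of_int (dec t1) / real (natabs t2)"
    using rat_code_val[OF c(2)] na[OF pos(2)] by simp
  have ra: "real_of_rat a = real_of_int (dec a1) / real (natabs a2)"
    using rat_code_val[OF c(3)] na[OF pos(3)] by simp
  have rb: "real_of_rat b = real_of_int (dec b1) / real (natabs b2)"
    using rat_code_val[OF c(4)] na[OF pos(4)] by simp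
  have npos: "natabs l2 > 0" "natabs t2 > 0" "natabs a2 > 0" "natabs b2 > 0"
    using na pos by fastforce+
  have lam01: "0 < real_of_rat lam" "real_of_rat lam < 1"
    using rat_code_val[OF c(1)] p pos(1) by (simp_all add: divide_less_eq)
  have "(\<exists>w. tds_solution lam t a b w) \<longleftrightarrow> (\<forall>n. \<exists>f. Cn (real_of_rat lam) (real_of_rat t) (real_of_rat a) (real_of_rat b) n f)"
    unfolding sol_iff using tds_char[OF lam01] by simp
  also have "\<dots> \<longleftrightarrow> (\<forall>n. \<exists>f. consI n f (natabs l1) (natabs l2) (dec t1) (natabs t2) (dec a1) (natabs a2) (dec b1) (natabs b2))"
    unfolding r rt ra rb using consI_Cn[OF npos] by simp
  also have "\<dots> \<longleftrightarrow> (\<forall>n. \<exists>u<2^n. consI n (\<lambda>i. odd ((u::nat) div 2 ^ i)) (natabs l1) (natabs l2) (dec t1) (natabs t2)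
                     (dec a1) (natabs a2) (dec b1) (natabs b2))"
    by (simp only: ex_bits)
  finally show ?thesis .
qed

lemma icomp_zero: "icomp k (\<lambda>xs. 0)"
  using icomp_nat[OF rcomp_const[of k 0]] by simp

lemma bcomp_vpair2: "bcomp 2 (\<lambda>xs. vpair (xs!0) (xs!1))"
proof -
  have inner: "bcomp (Suc 2) (\<lambda>ys. ys!0 dvd natabs (ys!1) \<and> ys!0 dvd ys!2 div 2 \<longrightarrow> ys!0 = 1)"
    by (intro bcomp_imp bcomp_and bcomp_dvd bcomp_eq rcomp_natabs rcomp_div rcomp_proj rcomp_const) auto
  have "bcomp 2 (\<lambda>xs. \<forall>e < xs!1 div 2 + 1. (\<lambda>ys. ys!0 dvd natabs (ys!1) \<and> ys!0 dvd ys!2 div 2 \<longrightarrow> ys!0 = 1) (e # xs))"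
    by (rule bcomp_all[OF inner]) (intro rcomp_add rcomp_div rcomp_proj rcomp_const, simp)
  then have "bcomp 2 (\<lambda>xs. even (xs!1) \<and> 0 < xs!1 \<and> (\<forall>e < xs!1 div 2 + 1. (\<lambda>ys. ys!0 dvd natabs (ys!1) \<and> ys!0 dvd ys!2 div 2 \<longrightarrow> ys!0 = 1) (e # xs)))"
    by (intro bcomp_and bcomp_even bcomp_less rcomp_proj rcomp_const) simp_all
  then show ?thesis by (rule bcomp_cong) (simp add: vpair_def)
qed

lemma bcomp_vpair: "rcomp k f \<Longrightarrow> rcomp k g \<Longrightarrow> bcomp k (\<lambda>xs. vpair (f xs) (g xs))"
  using bcomp_comp2[OF bcomp_vpair2] by simp

definition Gp :: "nat list \<Rightarrow> bool" where
  "Gp zs \<longleftrightarrow> vpair (zs!1) (zs!2) \<and> vpair (zs!3) (zs!4) \<and> vpair (zs!5) (zs!6) \<and> vpair (zs!7) (zs!8) \<and>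
     0 < dec (zs!1) \<and> dec (zs!1) < dec (zs!2) \<and>
     (\<forall>u<2 ^ (zs!0). \<not> consI (zs!0) (\<lambda>i. odd ((u::nat) div 2 ^ i)) (natabs (zs!1)) (natabs (zs!2))
         (dec (zs!3)) (natabs (zs!4)) (dec (zs!5)) (natabs (zs!6)) (dec (zs!7)) (natabs (zs!8)))"

lemma bcomp_Gp: "bcomp 9 Gp"
proof -
  have inner: "bcomp (Suc 9) (\<lambda>vs. \<not> consI (vs!1) (\<lambda>i. odd (vs!0 div 2 ^ i)) (natabs (vs!2)) (natabs (vs!3))
         (dec (vs!4)) (natabs (vs!5)) (dec (vs!6)) (natabs (vs!7)) (dec (vs!8)) (natabs (vs!9)))"
    by (intro bcomp_not bcomp_consI rcomp_natabs icomp_dec rcomp_proj) simp_all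
  have all: "bcomp 9 (\<lambda>zs. \<forall>u<2 ^ (zs!0). (\<lambda>vs. \<not> consI (vs!1) (\<lambda>i. odd (vs!0 div 2 ^ i)) (natabs (vs!2)) (natabs (vs!3))
         (dec (vs!4)) (natabs (vs!5)) (dec (vs!6)) (natabs (vs!7)) (dec (vs!8)) (natabs (vs!9))) (u # zs))"
    by (rule bcomp_all[OF inner]) (intro rcomp_pow rcomp_proj rcomp_const, simp)
  have "bcomp 9 (\<lambda>zs. vpair (zs!1) (zs!2) \<and> vpair (zs!3) (zs!4) \<and> vpair (zs!5) (zs!6) \<and> vpair (zs!7) (zs!8) \<and>
     0 < dec (zs!1) \<and> dec (zs!1) < dec (zs!2) \<and>
     (\<forall>u<2 ^ (zs!0). (\<lambda>vs. \<not> consI (vs!1) (\<lambda>i. odd (vs!0 div 2 ^ i)) (natabs (vs!2)) (natabs (vs!3))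
         (dec (vs!4)) (natabs (vs!5)) (dec (vs!6)) (natabs (vs!7)) (dec (vs!8)) (natabs (vs!9))) (u # zs)))"
    by (intro bcomp_and bcomp_vpair bcomp_ilt icomp_dec icomp_zero rcomp_proj rcomp_const all) simp_all
  then show ?thesis by (rule bcomp_cong) (simp add: Gp_def)
qed

lemma inst_code_eq:
  "inst_code lam t a b = [l1, l2, t1, t2, a1, a2, b1, b2] \<longleftrightarrow>
   rat_code lam = [l1, l2] \<and> rat_code t = [t1, t2] \<and> rat_code a = [a1, a2] \<and> rat_code b = [b1, b2]"
  unfolding inst_code_def rat_code_def by auto

lemma len8: "length xs = 8 \<Longrightarrow> \<exists>l1 l2 t1 t2 a1 a2 b1 b2. xs = [l1, l2, t1, t2, a1, a2, b1, b2]"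
  by (simp add: length_Suc_conv numeral_eq_Suc) blast

lemma tds_instance_code:
  assumes "rat_code lam = [l1, l2]"
  shows "tds_instance lam \<longleftrightarrow> 0 < dec l1 \<and> dec l1 < dec l2"
proof -
  have p: "dec l2 > 0" using rat_code_pos[OF assms] .
  have "real_of_rat lam = real_of_int (dec l1) / real_of_int (dec l2)" using rat_code_val[OF assms] .
  then have "0 < lam \<longleftrightarrow> 0 < real_of_int (dec l1) / real_of_int (dec l2)"
    "lam < 1 \<longleftrightarrow> real_of_int (dec l1) / real_of_int (dec l2) < 1"
    by (metis of_rat_0 of_rat_less, metis of_rat_1 of_rat_less)
  moreover have "0 < real_of_int (dec l1) / real_of_int (dec l2) \<longleftrightarrow> 0 < dec l1"
    using p by (simp add: zero_less_divide_iff)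
  moreover have "real_of_int (dec l1) / real_of_int (dec l2) < 1 \<longleftrightarrow> dec l1 < dec l2"
    using p by (simp add: divide_less_eq)
  ultimately show ?thesis unfolding tds_instance_def by simp
qed

lemma mem_iff:
  assumes "length xs = 8"
  shows "xs \<in> {inst_code lam t a b | lam t a b. tds_instance lam \<and> \<not> (\<exists>w. tds_solution lam t a b w)}
         \<longleftrightarrow> (\<exists>n. Gp (n # xs))"
proof -
  obtain l1 l2 t1 t2 a1 a2 b1 b2 where xs: "xs = [l1, l2, t1, t2, a1, a2, b1, b2]" using len8[OF assms] by blast
  have G: "Gp (n # xs) \<longleftrightarrow> vpair l1 l2 \<and> vpair t1 t2 \<and> vpair a1 a2 \<and> vpair b1 b2 \<and>
     0 < dec l1 \<and> dec l1 < dec l2 \<and>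
     (\<forall>u<2 ^ n. \<not> consI n (\<lambda>i. odd ((u::nat) div 2 ^ i)) (natabs l1) (natabs l2)
         (dec t1) (natabs t2) (dec a1) (natabs a2) (dec b1) (natabs b2))" for n
    unfolding Gp_def xs by simp
  show ?thesis
  proof
    assume "xs \<in> {inst_code lam t a b | lam t a b. tds_instance lam \<and> \<not> (\<exists>w. tds_solution lam t a b w)}"
    then obtain lam t a b where e: "xs = inst_code lam t a b"
      and i: "tds_instance lam" and ns: "\<not> (\<exists>w. tds_solution lam t a b w)"
      by blast
    have "inst_code lam t a b = [l1, l2, t1, t2, a1, a2, b1, b2]" using e unfolding xs by simp
    then have c: "rat_code lam = [l1, l2]" "rat_code t = [t1, t2]" "rat_code a = [a1, a2]" "rat_code b = [b1, b2]"
      unfolding inst_code_eq by blast+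
    have v: "vpair l1 l2" "vpair t1 t2" "vpair a1 a2" "vpair b1 b2"
      using c(1) c(2) c(3) c(4) ex_rat_code by blast+
    have p: "0 < dec l1" "dec l1 < dec l2" using i tds_instance_code[OF c(1)] by simp_all
    have "\<not> (\<forall>n. \<exists>u<2^n. consI n (\<lambda>i. odd ((u::nat) div 2 ^ i)) (natabs l1) (natabs l2) (dec t1) (natabs t2)
                     (dec a1) (natabs a2) (dec b1) (natabs b2))"
      using ns key[OF c p] by simp
    then obtain n where nc: "\<forall>u<2 ^ n. \<not> consI n (\<lambda>i. odd ((u::nat) div 2 ^ i)) (natabs l1) (natabs l2)
         (dec t1) (natabs t2) (dec a1) (natabs a2) (dec b1) (natabs b2)" by auto
    have "Gp (n # xs)" unfolding G using v p nc by simp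
    then show "\<exists>n. Gp (n # xs)" by (rule exI)
  next
    assume "\<exists>n. Gp (n # xs)"
    then obtain n where g: "Gp (n # xs)" by (elim exE)
    obtain v1 v2 v3 v4 where v: "vpair l1 l2" "vpair t1 t2" "vpair a1 a2" "vpair b1 b2"
      and p: "0 < dec l1" "dec l1 < dec l2"
      and nc: "\<forall>u<2 ^ n. \<not> consI n (\<lambda>i. odd ((u::nat) div 2 ^ i)) (natabs l1) (natabs l2)
         (dec t1) (natabs t2) (dec a1) (natabs a2) (dec b1) (natabs b2)"
      using g unfolding G by (elim conjE) simp
    obtain lam where c1: "rat_code lam = [l1, l2]" using v(1) ex_rat_code by blast
    obtain t where c2: "rat_code t = [t1, t2]" using v(2) ex_rat_code by blast
    obtain a where c3: "rat_code a = [a1, a2]" using v(3) ex_rat_code by blast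
    obtain b where c4: "rat_code b = [b1, b2]" using v(4) ex_rat_code by blast
    have i: "tds_instance lam" using tds_instance_code[OF c1] p by simp
    have ns: "\<not> (\<exists>w. tds_solution lam t a b w)"
    proof
      assume "\<exists>w. tds_solution lam t a b w"
      then have "\<forall>n. \<exists>u<2^n. consI n (\<lambda>i. odd ((u::nat) div 2 ^ i)) (natabs l1) (natabs l2) (dec t1) (natabs t2)
                     (dec a1) (natabs a2) (dec b1) (natabs b2)"
        using key[OF c1 c2 c3 c4 p] by simp
      then have "\<exists>u<2^n. consI n (\<lambda>i. odd ((u::nat) div 2 ^ i)) (natabs l1) (natabs l2) (dec t1) (natabs t2)
                     (dec a1) (natabs a2) (dec b1) (natabs b2)" by (rule spec)
      then show False using nc by blast
    qed
    have "inst_code lam t a b = xs" unfolding xs inst_code_eq using c1 c2 c3 c4 by (intro conjI)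
    then show "xs \<in> {inst_code lam t a b | lam t a b. tds_instance lam \<and> \<not> (\<exists>w. tds_solution lam t a b w)}"
      using i ns by blast
  qed
qed

theorem proposition11:
  shows "re_set 8 {inst_code lam t a b | lam t a b.
                    tds_instance lam \<and> \<not> (\<exists>w. tds_solution lam t a b w)}"
  unfolding re_set_def
proof (intro conjI)
  show "\<forall>xs\<in>{inst_code lam t a b | lam t a b. tds_instance lam \<and> \<not> (\<exists>w. tds_solution lam t a b w)}. length xs = 8"
    by (auto simp: inst_code_def rat_code_def)
  obtain c where c: "\<forall>xs. length xs = 8 \<longrightarrow> ((\<exists>y. reval c xs y) \<longleftrightarrow> (\<exists>n. Gp (n # xs)))"
    using rcomp_minim[of 8 Gp] bcomp_Gp by auto
  have "\<forall>xs. length xs = 8 \<longrightarrow>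
      (xs \<in> {inst_code lam t a b | lam t a b. tds_instance lam \<and> \<not> (\<exists>w. tds_solution lam t a b w)}) = (\<exists>y. reval c xs y)"
  proof (intro allI impI)
    fix xs :: "nat list" assume l: "length xs = 8"
    show "(xs \<in> {inst_code lam t a b | lam t a b. tds_instance lam \<and> \<not> (\<exists>w. tds_solution lam t a b w)}) = (\<exists>y. reval c xs y)"
      unfolding mem_iff[OF l] using c l by simp
  qed
  then show "\<exists>f. \<forall>xs. length xs = 8 \<longrightarrow>
      (xs \<in> {inst_code lam t a b | lam t a b. tds_instance lam \<and> \<not> (\<exists>w. tds_solution lam t a b w)}) = (\<exists>y. reval f xs y)"
    by (rule exI)
qed

end
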